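(* Let $F$ be a field of finite characteristic $p$ and let $n \in \mathbb{N}$ with $p \nmid n$. Then the polynomial $x^n + y^n + x^n y^n$ is irreducible in the polynomial ring $F[x,y]$. *)

theory Defs
  imports "HOL-Computational_Algebra.Polynomial_Factorial"
begin

text \<open>F[x,y] is rendered as (F[x])[y], i.e. the type 'a poly poly.
  The inner variable is x, the outer variable is y.\<close>

definition varX :: "'a::comm_semiring_1 poly poly" where
  "varX = [:[:0, 1:]:]"

definition varY :: "'a::comm_semiring_1 poly poly" where
  "varY = [:0, 1:]"

end

theory Submission
  imports Defs
begin

lemma eis_aux:
  fixes q :: "'b::idom" and f g h :: "'b poly"
  assumes q: "prime_elem q" and hi: "\<And>i. i \<ge> 1 \<Longrightarrow> q dvd coeff f i"
    and c0: "\<not> q dvd coeff f 0" and fgh: "f = g * h"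
  shows "\<forall>i\<ge>1. q dvd coeff g i"
proof (rule ccontr)
  assume "\<not> (\<forall>i\<ge>1. q dvd coeff g i)"
  define A where "A = {i. \<not> q dvd coeff g i}"
  define B where "B = {i. \<not> q dvd coeff h i}"
  have finA: "finite A"
    by (rule finite_subset[of _ "{..degree g}"]) (auto simp: A_def coeff_eq_0 intro: le_degree)
  have finB: "finite B"
    by (rule finite_subset[of _ "{..degree h}"]) (auto simp: B_def coeff_eq_0 intro: le_degree)
  have c0': "coeff f 0 = coeff g 0 * coeff h 0" using fgh by (simp add: coeff_mult)
  have "0 \<in> B" using c0 c0' by (auto simp: B_def)
  then have Bne: "B \<noteq> {}" by auto
  obtain i0 where i0: "i0 \<ge> 1" "i0 \<in> A" using \<open>\<not> (\<forall>i\<ge>1. q dvd coeff g i)\<close> by (auto simp: A_def)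
  define a where "a = Max A"
  define b where "b = Max B"
  have aA: "a \<in> A" using finA i0 by (auto simp: a_def intro: Max_in)
  have a1: "a \<ge> 1" using finA i0 Max_ge[of A i0] unfolding a_def by linarith
  have bB: "b \<in> B" using finB Bne by (auto simp: b_def intro: Max_in)
  have ga: "q dvd coeff g i" if "i > a" for i
    proof (rule ccontr)
    assume "\<not> q dvd coeff g i"
    then have "i \<in> A" by (simp add: A_def)
    then have "i \<le> a" using finA by (simp add: a_def)
    then show False using that by simp
  qed
  have hb: "q dvd coeff h j" if "j > b" for j
    proof (rule ccontr)
    assume "\<not> q dvd coeff h j"
    then have "j \<in> B" by (simp add: B_def)
    then have "j \<le> b" using finB by (simp add: b_def)
    then show False using that by simp
  qed
  have "coeff f (a+b) = (\<Sum>i\<le>a+b. coeff g i * coeff h (a+b-i))"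
    using fgh by (simp add: coeff_mult)
  also have "\<dots> = coeff g a * coeff h b + (\<Sum>i\<in>{..a+b}-{a}. coeff g i * coeff h (a+b-i))"
    by (subst sum.remove[of _ a]) auto
  finally have eq: "coeff f (a+b) = coeff g a * coeff h b + (\<Sum>i\<in>{..a+b}-{a}. coeff g i * coeff h (a+b-i))" .
  have S: "q dvd (\<Sum>i\<in>{..a+b}-{a}. coeff g i * coeff h (a+b-i))"
  proof (rule dvd_sum)
    fix i assume "i \<in> {..a+b}-{a}"
    then have "i > a \<or> a+b-i > b" by auto
    then show "q dvd coeff g i * coeff h (a+b-i)"
      using ga hb by (meson dvd_mult dvd_mult2)
  qed
  have F: "q dvd coeff f (a+b)" using hi a1 by simp
  have "q dvd coeff g a * coeff h b" 
  proof -
    have "coeff g a * coeff h b = coeff f (a+b) - (\<Sum>i\<in>{..a+b}-{a}. coeff g i * coeff h (a+b-i))"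
      using eq by simp
    then show ?thesis using S F by (simp add: dvd_diff)
  qed
  then show False using q aA bB by (auto simp: A_def B_def prime_elem_dvd_mult_iff)
qed

lemma X_pow_monom: "([:0, 1:] :: 'c::comm_semiring_1 poly) ^ n = monom 1 n"
proof -
  have "([:0, 1:] :: 'c poly) = monom 1 1" by (simp add: monom_Suc)
  then show ?thesis by (simp add: monom_power)
qed

lemma irr_factor_exists:
  fixes p :: "'c::field poly"
  shows "degree p \<ge> 1 \<Longrightarrow> \<exists>q. irreducible q \<and> q dvd p"
proof (induction "degree p" arbitrary: p rule: less_induct)
  case less
  have pnz: "p \<noteq> 0" using less.prems by auto
  show ?case
  proof (cases "irreducible p")
    case True then show ?thesis by (intro exI[of _ p]) auto
  next
    case False
    have pnu: "\<not> p dvd 1" using less.prems pnz by (simp add: is_unit_iff_degree)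
    from False pnz pnu obtain a b where ab: "p = a * b" "\<not> a dvd 1" "\<not> b dvd 1"
      by (auto simp: irreducible_def)
    have anz: "a \<noteq> 0" "b \<noteq> 0" using ab pnz by auto
    have da: "degree a \<ge> 1" using ab(2) anz by (auto simp: is_unit_iff_degree)
    have db: "degree b \<ge> 1" using ab(3) anz by (auto simp: is_unit_iff_degree)
    have "degree p = degree a + degree b" using ab anz by (simp add: degree_mult_eq)
    then have "degree a < degree p" using db by simp
    from less.hyps[OF this da] obtain q where "irreducible q" "q dvd a" by blast
    then show ?thesis using ab(1) by auto
  qed
qed

theorem lemma4p1:
  fixes n :: nat
  assumes "CHAR('a::field) > 0"
    and "\<not> CHAR('a) dvd n"
  shows "irreducible ((varX :: 'a poly poly) ^ n + varY ^ n + varX ^ n * varY ^ n)"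
proof -
  define X :: "'a poly" where "X = [:0, 1:]"
  define P where "P = 1 + X ^ n"
  define f where "f = (varX :: 'a poly poly) ^ n + varY ^ n + varX ^ n * varY ^ n"
  have n1: "n \<ge> 1" using assms(2) by (cases n) auto
  have nz: "(of_nat n :: 'a) \<noteq> 0" using assms(2) by (simp add: of_nat_eq_0_iff_char_dvd)
  have Xn: "X ^ n = monom 1 n" by (simp add: X_def X_pow_monom)
  have cf: "coeff f i = (if i = 0 then X ^ n else 0) + (if i = n then P else 0)" for i
    using n1 by (auto simp: f_def varX_def varY_def X_pow_monom poly_const_pow P_def X_def coeff_monom coeff_pCons split: nat.split
        simp flip: monom_altdef smult_monom)
  have cP: "coeff P n = 1" using n1 by (simp add: P_def Xn coeff_monom)
  have Pnz: "P \<noteq> 0" using cP by auto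
  have degP: "degree P = n"
    using n1 by (simp add: P_def Xn degree_add_eq_right degree_monom_eq)
  have Pnu: "\<not> P dvd 1"
    using degP n1 by (auto simp: is_unit_poly_iff)
  obtain q where q: "q dvd P" "irreducible q" using irr_factor_exists[of P] degP n1 by auto
  have qe: "prime_elem q" using q by (simp add: field_poly_irreducible_imp_prime)
  have qnu: "\<not> q dvd 1" using q by (simp add: irreducible_def)
  have qX: "\<not> q dvd X ^ n"
  proof
    assume "q dvd X ^ n"
    then have "q dvd P - X ^ n" using q by (simp add: dvd_diff)
    then show False using qnu by (simp add: P_def)
  qed
  have qP2: "\<not> q * q dvd P"
  proof
    assume "q * q dvd P"
    then obtain r where r: "P = q * q * r" by (auto elim: dvdE)
    have "pderiv P = q * (2 * pderiv q * r + q * pderiv r)"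
      by (simp add: r pderiv_mult algebra_simps)
    then have "q dvd pderiv P" by simp
    moreover have "pderiv P = smult (of_nat n) (monom 1 (n - 1))"
      by (simp add: P_def Xn pderiv_add pderiv_monom smult_monom)
    ultimately have "q dvd monom 1 (n - 1)" using nz dvd_smult_cancel by metis
    then have "q dvd monom 1 (n - 1) * X" by simp
    moreover have "monom 1 (n - 1) * X = X ^ n"
    proof -
      have "monom 1 (n - 1) * X = X ^ (n - 1) * X" by (simp add: X_def X_pow_monom)
      also have "\<dots> = X ^ n" using n1 by (cases n) (auto simp: power_Suc2)
      finally show ?thesis .
    qed
    ultimately show False using qX by simp
  qed
  have degf: "degree f = n"
    by (rule antisym) (use n1 in \<open>auto intro!: degree_le le_degree simp: cf Pnz\<close>)
  have lf: "lead_coeff f = P" using degf cf n1 by simp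
  show ?thesis unfolding f_def[symmetric]
  proof (rule irreducibleI)
    show "f \<noteq> 0" using degf n1 by auto
    show "\<not> f dvd 1" using degf n1 by (auto simp: is_unit_poly_iff)
    fix g h assume fgh: "f = g * h"
    have hi: "\<And>i. i \<ge> 1 \<Longrightarrow> q dvd coeff f i" using q n1 by (simp add: cf)
    have c0: "\<not> q dvd coeff f 0" using qX n1 by (simp add: cf)
    have G: "\<forall>i\<ge>1. q dvd coeff g i" by (rule eis_aux[OF qe hi c0 fgh])
    have H: "\<forall>i\<ge>1. q dvd coeff h i" proof -
      have fhg: "f = h * g" using fgh by (simp add: mult.commute)
      show ?thesis by (rule eis_aux[OF qe hi c0 fhg])
    qed
    have const: "is_unit c" if "f = smult c k" for c k
    proof -
      have "c dvd coeff f 0" "c dvd coeff f n" using that by simp_all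
      then have "c dvd X ^ n" "c dvd P" using n1 by (simp_all add: cf)
      then have "c dvd P - X ^ n" by (simp add: dvd_diff)
      then show ?thesis by (simp add: P_def)
    qed
    show "g dvd 1 \<or> h dvd 1"
    proof (cases "degree g = 0 \<or> degree h = 0")
      case True
      then show ?thesis
      proof
        assume "degree g = 0"
        then obtain c where "g = [:c:]" by (metis degree_eq_zeroE)
        moreover have "is_unit c" using fgh \<open>g = [:c:]\<close> const by simp
        ultimately show ?thesis by (simp add: is_unit_poly_iff)
      next
        assume "degree h = 0"
        then obtain c where "h = [:c:]" by (metis degree_eq_zeroE)
        moreover have "is_unit c" using fgh \<open>h = [:c:]\<close> const by simp
        ultimately show ?thesis by (simp add: is_unit_poly_iff)
      qed
    next
      case False
      then have "q dvd lead_coeff g" "q dvd lead_coeff h" using G H by auto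
      then have "q * q dvd lead_coeff g * lead_coeff h" by (rule mult_dvd_mono)
      also have "lead_coeff g * lead_coeff h = P" using lf fgh by (simp add: lead_coeff_mult)
      finally show ?thesis using qP2 by simp
    qed
  qed
qed

end
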